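(* For every Stackelberg game $(G,L,F)$, $\mathcal{X}^S\subseteq\mathcal{X}^{S\text{-}NF}$ and $\mathcal{X}^{PS}\subseteq\mathcal{X}^{PS\text{-}NF}$, where $\mathcal{X}^S,\mathcal{X}^{PS}$ refer to $(G,L,F)$ and $\mathcal{X}^{S\text{-}NF},\mathcal{X}^{PS\text{-}NF}$ refer to $(G,N,\emptyset)$.
   Context: A finite game is $G=(N,\{S_p\}_{p\in N},\{u_p\}_{p\in N})$ with players $N=\{1,\dots,n\}$, finite nonempty strategy sets $S_p$, and utilities $u_p:S\to\mathbb{R}$ on $S=\prod_{p\in N}S_p$; write $s=(s_p,s_{-p})$ with $s_{-p}\in S_{-p}=\prod_{q\neq p}S_q$. $\mathcal{X}=\Delta(S)$ is the set of probability distributions on $S$ and $u_p(x)=\sum_{s\in S}x(s)u_p(s)$ for $x\in\mathcal{X}$. For $P\subseteq N$, $\mathcal{X}^{CE}_P$ is the set of $x\in\mathcal{X}$ such that for every $p\in P$ and all $s_p\neq s_p'\in S_p$: $\sum_{s_{-p}\in S_{-p}} x(s_p,s_{-p})\,(u_p(s_p,s_{-p})-u_p(s_p',s_{-p}))\ge 0$; $\mathcal{X}^{CE}=\mathcal{X}^{CE}_N$ is the set of correlated equilibria of $G$. A Stackelberg game (SG) is a triple $(G,L,F)$ with $L\cup F=N$ and $L\cap F=\emptyset$ (leaders and followers). For $P\subseteq N$, $\Pi_P$ is the set of ordered subsets of $P$ (finite sequences of pairwise distinct elements of $P$, including the empty sequence $\varnothing$); for $\pi\in\Pi_P$ and $p\in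 P$ not occurring in $\pi$, $\pi p$ is $\pi$ with $p$ appended; when used as a set, $\pi$ means its set of entries. $\mathbf{X}=\prod_{\pi\in\Pi_L}\mathcal{X}^{CE}_{\pi\cup F}$, with elements $\mathbf{x}=[x_\pi]_{\pi\in\Pi_L}$. For $\mathbf{x}\in\mathbf{X}$ and $\pi\in\Pi_L$, $x_\pi$ is stable if $u_p(x_\pi)\ge u_p(x_{\pi p})$ for all $p\in L\setminus\pi$; $\mathbf{x}$ is stable if $x_\varnothing$ is stable, and perfectly stable if $x_\pi$ is stable for every $\pi\in\Pi_L$; $\mathbf{X}^{S}$ and $\mathbf{X}^{PS}$ denote the sets of stable and perfectly stable elements of $\mathbf{X}$. $\mathcal{X}^S=\{x_\varnothing:\mathbf{x}\in\mathbf{X}^S\}$ and $\mathcal{X}^{PS}=\{x_\varnothing:\mathbf{x}\in\mathbf{X}^{PS}\}$ (for the given SG). $\mathcal{X}^{S\text{-}NF}$ and $\mathcal{X}^{PS\text{-}NF}$ are the sets $\mathcal{X}^S$ and $\mathcal{X}^{PS}$ computed for the SG $(G,N,\emptyset)$ in which every player is a leader. *)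

theory Defs
  imports Complex_Main "HOL-Library.FuncSet"
begin

text \<open>A finite game: players are the elements of a finite type 'p (N = UNIV),
  strategy sets S p :: 'a set, utilities u p :: ('p \<Rightarrow> 'a) \<Rightarrow> real on profiles.\<close>

definition profiles :: "('p \<Rightarrow> 'a set) \<Rightarrow> ('p \<Rightarrow> 'a) set" where
  "profiles S = PiE UNIV S"

definition finite_game :: "('p::finite \<Rightarrow> 'a set) \<Rightarrow> bool" where
  "finite_game S \<longleftrightarrow> (\<forall>p. finite (S p) \<and> S p \<noteq> {})"

definition distributions :: "('p \<Rightarrow> 'a set) \<Rightarrow> (('p \<Rightarrow> 'a) \<Rightarrow> real) set" where
  "distributions S = {x. (\<forall>s\<in>profiles S. 0 \<le> x s) \<and> (\<forall>s. s \<notin> profiles S \<longrightarrow> x s = 0)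
                         \<and> (\<Sum>s\<in>profiles S. x s) = 1}"

definition exp_util :: "('p \<Rightarrow> 'a set) \<Rightarrow> ('p \<Rightarrow> ('p \<Rightarrow> 'a) \<Rightarrow> real) \<Rightarrow> 'p
    \<Rightarrow> (('p \<Rightarrow> 'a) \<Rightarrow> real) \<Rightarrow> real" where
  "exp_util S u p x = (\<Sum>s\<in>profiles S. x s * u p s)"

text \<open>X^CE_P. The sum over s_{-p} with s_p fixed is the sum over profiles s with s p = s_p;
  (s_p', s_{-p}) is s(p := s_p').\<close>
definition CE_set :: "('p \<Rightarrow> 'a set) \<Rightarrow> ('p \<Rightarrow> ('p \<Rightarrow> 'a) \<Rightarrow> real) \<Rightarrow> 'p set
    \<Rightarrow> (('p \<Rightarrow> 'a) \<Rightarrow> real) set" where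
  "CE_set S u P = {x \<in> distributions S.
     \<forall>p\<in>P. \<forall>sp\<in>S p. \<forall>sp'\<in>S p. sp \<noteq> sp' \<longrightarrow>
       0 \<le> (\<Sum>s\<in>{s\<in>profiles S. s p = sp}. x s * (u p s - u p (s(p := sp'))))}"

definition ordered_subsets :: "'p set \<Rightarrow> 'p list set" where
  "ordered_subsets P = {\<pi>. distinct \<pi> \<and> set \<pi> \<subseteq> P}"

text \<open>Bold X: families [x_pi]_{pi in Pi_L} with x_pi in X^CE_{pi union F}
  (values at lists outside Pi_L are irrelevant and left unconstrained).\<close>
definition Xbold :: "('p \<Rightarrow> 'a set) \<Rightarrow> ('p \<Rightarrow> ('p \<Rightarrow> 'a) \<Rightarrow> real) \<Rightarrow> 'p set \<Rightarrow> 'p set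
    \<Rightarrow> ('p list \<Rightarrow> (('p \<Rightarrow> 'a) \<Rightarrow> real)) set" where
  "Xbold S u L F = {X. \<forall>\<pi>\<in>ordered_subsets L. X \<pi> \<in> CE_set S u (set \<pi> \<union> F)}"

definition stable_at :: "('p \<Rightarrow> 'a set) \<Rightarrow> ('p \<Rightarrow> ('p \<Rightarrow> 'a) \<Rightarrow> real) \<Rightarrow> 'p set
    \<Rightarrow> ('p list \<Rightarrow> (('p \<Rightarrow> 'a) \<Rightarrow> real)) \<Rightarrow> 'p list \<Rightarrow> bool" where
  "stable_at S u L X \<pi> \<longleftrightarrow>
     (\<forall>p\<in>L - set \<pi>. exp_util S u p (X \<pi>) \<ge> exp_util S u p (X (\<pi> @ [p])))"

definition stable :: "('p \<Rightarrow> 'a set) \<Rightarrow> ('p \<Rightarrow> ('p \<Rightarrow> 'a) \<Rightarrow> real) \<Rightarrow> 'p set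
    \<Rightarrow> ('p list \<Rightarrow> (('p \<Rightarrow> 'a) \<Rightarrow> real)) \<Rightarrow> bool" where
  "stable S u L X \<longleftrightarrow> stable_at S u L X []"

definition perfectly_stable :: "('p \<Rightarrow> 'a set) \<Rightarrow> ('p \<Rightarrow> ('p \<Rightarrow> 'a) \<Rightarrow> real) \<Rightarrow> 'p set
    \<Rightarrow> ('p list \<Rightarrow> (('p \<Rightarrow> 'a) \<Rightarrow> real)) \<Rightarrow> bool" where
  "perfectly_stable S u L X \<longleftrightarrow> (\<forall>\<pi>\<in>ordered_subsets L. stable_at S u L X \<pi>)"

definition XS :: "('p \<Rightarrow> 'a set) \<Rightarrow> ('p \<Rightarrow> ('p \<Rightarrow> 'a) \<Rightarrow> real) \<Rightarrow> 'p set \<Rightarrow> 'p set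
    \<Rightarrow> (('p \<Rightarrow> 'a) \<Rightarrow> real) set" where
  "XS S u L F = {X [] | X. X \<in> Xbold S u L F \<and> stable S u L X}"

definition XPS :: "('p \<Rightarrow> 'a set) \<Rightarrow> ('p \<Rightarrow> ('p \<Rightarrow> 'a) \<Rightarrow> real) \<Rightarrow> 'p set \<Rightarrow> 'p set
    \<Rightarrow> (('p \<Rightarrow> 'a) \<Rightarrow> real) set" where
  "XPS S u L F = {X [] | X. X \<in> Xbold S u L F \<and> perfectly_stable S u L X}"

end

theory Submission
  imports Defs
begin

lemma CE_mono: "P \<subseteq> Q \<Longrightarrow> CE_set S u Q \<subseteq> CE_set S u P"
  unfolding CE_set_def by blast

lemma key:
  fixes X :: "'p list \<Rightarrow> (('p \<Rightarrow> 'a) \<Rightarrow> real)" and L F :: "'p set" and \<pi> :: "'p list"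
  assumes LF: "L \<union> F = UNIV"
  shows "X \<in> Xbold S u L F \<Longrightarrow> (\<lambda>\<pi>. X (filter (\<lambda>q. q \<in> L) \<pi>)) \<in> Xbold S u UNIV {}"
    and "stable_at S u L X (filter (\<lambda>q. q \<in> L) \<pi>) \<Longrightarrow>
         stable_at S u UNIV (\<lambda>\<pi>. X (filter (\<lambda>q. q \<in> L) \<pi>)) \<pi>"
proof -
  assume X: "X \<in> Xbold S u L F"
  show "(\<lambda>\<pi>. X (filter (\<lambda>q. q \<in> L) \<pi>)) \<in> Xbold S u UNIV {}"
    unfolding Xbold_def
  proof (intro CollectI ballI)
    fix \<pi> :: "'p list" assume "\<pi> \<in> ordered_subsets UNIV"
    hence "filter (\<lambda>q. q \<in> L) \<pi> \<in> ordered_subsets L" by (auto simp: ordered_subsets_def)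
    hence "X (filter (\<lambda>q. q \<in> L) \<pi>) \<in> CE_set S u (set (filter (\<lambda>q. q \<in> L) \<pi>) \<union> F)"
      using X unfolding Xbold_def by blast
    moreover have "set \<pi> \<union> {} \<subseteq> set (filter (\<lambda>q. q \<in> L) \<pi>) \<union> F" using LF by auto
    ultimately show "X (filter (\<lambda>q. q \<in> L) \<pi>) \<in> CE_set S u (set \<pi> \<union> {})"
      using CE_mono by blast
  qed
next
  assume st: "stable_at S u L X (filter (\<lambda>q. q \<in> L) \<pi>)"
  show "stable_at S u UNIV (\<lambda>\<pi>. X (filter (\<lambda>q. q \<in> L) \<pi>)) \<pi>"
    unfolding stable_at_def
  proof
    fix p assume p: "p \<in> UNIV - set \<pi>"
    show "exp_util S u p (X (filter (\<lambda>q. q \<in> L) \<pi>)) \<ge> exp_util S u p (X (filter (\<lambda>q. q \<in> L) (\<pi> @ [p])))"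
    proof (cases "p \<in> L")
      case True
      then have "p \<in> L - set (filter (\<lambda>q. q \<in> L) \<pi>)" using p by auto
      then show ?thesis using st True unfolding stable_at_def by auto
    qed simp
  qed
qed

theorem mainTheorem14:
  fixes S :: "'p::finite \<Rightarrow> 'a set"
    and u :: "'p \<Rightarrow> ('p \<Rightarrow> 'a) \<Rightarrow> real"
    and L F :: "'p set"
  assumes "finite_game S"
    and "L \<union> F = UNIV"
    and "L \<inter> F = {}"
  shows "XS S u L F \<subseteq> XS S u UNIV {} \<and> XPS S u L F \<subseteq> XPS S u UNIV {}"
proof
  show "XS S u L F \<subseteq> XS S u UNIV {}"
  proof
    fix x assume "x \<in> XS S u L F"
    then obtain X where x: "x = X []" "X \<in> Xbold S u L F" "stable S u L X"
      unfolding XS_def by blast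
    let ?Y = "\<lambda>\<pi>. X (filter (\<lambda>q. q \<in> L) \<pi>)"
    have "?Y \<in> Xbold S u UNIV {}" using key(1)[OF assms(2) x(2)] .
    moreover have "stable S u UNIV ?Y"
      using key(2)[OF assms(2), of S u X "[]"] x(3) unfolding stable_def by simp
    ultimately show "x \<in> XS S u UNIV {}" unfolding XS_def using x(1) by (intro CollectI exI[of _ ?Y]) simp
  qed
next
  show "XPS S u L F \<subseteq> XPS S u UNIV {}"
  proof
    fix x assume "x \<in> XPS S u L F"
    then obtain X where x: "x = X []" "X \<in> Xbold S u L F" "perfectly_stable S u L X"
      unfolding XPS_def by blast
    let ?Y = "\<lambda>\<pi>. X (filter (\<lambda>q. q \<in> L) \<pi>)"
    have "?Y \<in> Xbold S u UNIV {}" using key(1)[OF assms(2) x(2)] .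
    moreover have "perfectly_stable S u UNIV ?Y"
      unfolding perfectly_stable_def
    proof
      fix \<pi> :: "'p list" assume "\<pi> \<in> ordered_subsets UNIV"
      hence "filter (\<lambda>q. q \<in> L) \<pi> \<in> ordered_subsets L" by (auto simp: ordered_subsets_def)
      thus "stable_at S u UNIV ?Y \<pi>"
        using key(2)[OF assms(2)] x(3) unfolding perfectly_stable_def by blast
    qed
    ultimately show "x \<in> XPS S u UNIV {}" unfolding XPS_def using x(1) by (intro CollectI exI[of _ ?Y]) simp
  qed
qed

end
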